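(* Let $w\in\Sigma^n$. If $\mathtt{BR}(w)$ contains no rich word, then $|\mathrm{Alph}(w)|<n-1$.
   Context: $\Sigma$ is an alphabet and $\Sigma^n$ the set of words of length $n$ over it. For a word $w=w_1\cdots w_n$, $w^R=w_n\cdots w_1$; $w$ is a palindrome if $w=w^R$; a factor of $w$ is a word $u$ with $w=puq$. A word $w$ is rich if the number of distinct nonempty palindromic factors of $w$ equals $|w|$. $\mathrm{Alph}(w)$ is the set of letters occurring in $w$. The block reversal of a nonempty word $w$ is $\mathtt{BR}(w)=\{B_t\cdots B_1 : w=B_1\cdots B_t,\ t\ge1,\ \text{each } B_i \text{ nonempty}\}$. *)

theory Defs
  imports Main "HOL-Library.Sublist"
begin

definition pal_factors :: "'a list \<Rightarrow> 'a list set" where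
  "pal_factors w = {u. u \<noteq> [] \<and> sublist u w \<and> rev u = u}"

definition rich :: "'a list \<Rightarrow> bool" where
  "rich w \<longleftrightarrow> card (pal_factors w) = length w"

definition block_reversal :: "'a list \<Rightarrow> 'a list set" where
  "block_reversal w = {concat (rev Bs) | Bs. Bs \<noteq> [] \<and> (\<forall>B\<in>set Bs. B \<noteq> []) \<and> concat Bs = w}"

end

theory Submission
  imports Defs
begin

lemma pal_len2:
  assumes "rev u = u" "length u \<ge> 2"
  shows "\<exists>c m. u = c # m @ [c] \<and> rev m = m"
proof -
  obtain c u' where u: "u = c # u'" using assms by (cases u) auto
  then have "u' \<noteq> []" using assms by auto
  define m where "m = butlast u'"
  define d where "d = last u'"
  have u': "u' = m @ [d]" unfolding m_def d_def using \<open>u' \<noteq> []\<close> by simp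
  have h1: "rev u = d # rev m @ [c]" using u u' by simp
  have h2: "u = c # m @ [d]" using u u' by simp
  have "d # rev m @ [c] = c # m @ [d]" using assms(1) h1 h2 by metis
  then have dc: "d = c" and e: "rev m @ [c] = m @ [d]" by (simp_all only: list.inject)
  from e have "rev m = m" unfolding append1_eq_conv by blast
  then show ?thesis using u u' dc by blast
qed

lemma count_distinct: "distinct xs \<Longrightarrow> count_list xs x \<le> 1"
  by (induction xs) auto

lemma count_sublist: "sublist u v \<Longrightarrow> count_list u x \<le> count_list v x"
  by (auto simp: sublist_def)

lemma singleton_sublist: "sublist [c] v \<longleftrightarrow> c \<in> set v"
  by (induction v) (auto simp: sublist_Cons_right)

lemma no_aba:
  assumes "a \<notin> set p" "a \<notin> set q" "b \<noteq> a"
  shows "\<not> sublist [a,b,a] (p @ a # a # q)"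
  using assms(1)
proof (induction p)
  case Nil
  then show ?case using assms by (auto simp: sublist_Cons_right prefix_def dest: set_mono_sublist)
next
  case (Cons c p)
  then show ?case by (auto simp: sublist_Cons_right)
qed

lemma rich_distinct:
  assumes "distinct w"
  shows "rich w"
proof -
  have "pal_factors w = (\<lambda>c. [c]) ` set w"
  proof
    show "pal_factors w \<subseteq> (\<lambda>c. [c]) ` set w"
    proof
      fix u assume "u \<in> pal_factors w"
      then have u: "u \<noteq> []" "sublist u w" "rev u = u" by (auto simp: pal_factors_def)
      show "u \<in> (\<lambda>c. [c]) ` set w"
      proof (cases "length u \<ge> 2")
        case True
        then obtain c m where "u = c # m @ [c]" using pal_len2 u by blast
        then have "count_list u c \<ge> 2" by simp
        moreover have "count_list w c \<le> 1" by (rule count_distinct[OF assms])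
        moreover have "count_list u c \<le> count_list w c" by (rule count_sublist[OF u(2)])
        ultimately show ?thesis by linarith
      next
        case False
        then obtain c where "u = [c]" using u(1) False by (cases u; cases "tl u") auto
        then show ?thesis using u(2) by (auto simp: singleton_sublist)
      qed
    qed
    show "(\<lambda>c. [c]) ` set w \<subseteq> pal_factors w"
      by (auto simp: pal_factors_def singleton_sublist)
  qed
  moreover have "card ((\<lambda>c. [c]) ` set w) = length w"
    using assms by (simp add: card_image distinct_card inj_on_def)
  ultimately show ?thesis by (simp add: rich_def)
qed

lemma rich_aa:
  assumes "distinct (p @ a # q)"
  shows "rich (p @ a # a # q)"
proof -
  let ?v = "p @ a # a # q"
  have cnt: "count_list ?v x \<le> 1" if "x \<noteq> a" for x
    using count_distinct[OF assms, of x] that by simp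
  have cnta: "count_list ?v a = 2" using assms by simp
  have "pal_factors ?v = insert [a,a] ((\<lambda>c. [c]) ` set (p @ a # q))"
  proof
    show "pal_factors ?v \<subseteq> insert [a,a] ((\<lambda>c. [c]) ` set (p @ a # q))"
    proof
      fix u assume "u \<in> pal_factors ?v"
      then have u: "u \<noteq> []" "sublist u ?v" "rev u = u" by (auto simp: pal_factors_def)
      show "u \<in> insert [a,a] ((\<lambda>c. [c]) ` set (p @ a # q))"
      proof (cases "length u \<ge> 2")
        case True
        then obtain c m where um: "u = c # m @ [c]" "rev m = m" using pal_len2 u by blast
        then have "count_list u c \<ge> 2" by simp
        then have ca: "c = a" using count_sublist[OF u(2), of c] cnt[of c] by (cases "c = a") auto
        have "count_list u a \<le> 2" using count_sublist[OF u(2), of a] cnta by simp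
        then have am: "a \<notin> set m" using um ca by (auto simp: count_list_0_iff[symmetric])
        show ?thesis
        proof (cases m)
          case Nil
          then show ?thesis using um ca by simp
        next
          case (Cons d m')
          show ?thesis
          proof (cases "length m \<ge> 2")
            case True
            then obtain e k where mk: "m = e # k @ [e]" using pal_len2 um(2) by blast
            then have "e \<noteq> a" using am by auto
            moreover have "count_list u e \<ge> 2" using um mk ca \<open>e \<noteq> a\<close> by simp
            ultimately show ?thesis using count_sublist[OF u(2), of e] cnt[of e] by simp
          next
            case False
            then have "m = [d]" using Cons by (cases m') auto
            then have "sublist [a,d,a] ?v" using u(2) um ca by simp
            moreover have "d \<noteq> a" using am \<open>m = [d]\<close> by simp
            ultimately show ?thesis using no_aba[of a p q d] assms by simp
          qed
        qed
      next
        case False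
        then obtain c where "u = [c]" using u(1) False by (cases u; cases "tl u") auto
        then show ?thesis using u(2) by (auto simp: singleton_sublist)
      qed
    qed
    show "insert [a,a] ((\<lambda>c. [c]) ` set (p @ a # q)) \<subseteq> pal_factors ?v"
    proof -
      have "sublist [a,a] ?v" unfolding sublist_def by (intro exI[of _ p] exI[of _ q]) simp
      then show ?thesis by (auto simp: pal_factors_def singleton_sublist)
    qed
  qed
  moreover have "card ((\<lambda>c. [c]) ` set (p @ a # q)) = card (set (p @ a # q))"
    by (rule card_image) (simp add: inj_on_def)
  moreover have "card (set (p @ a # q)) = length (p @ a # q)" by (rule distinct_card[OF assms])
  moreover have "[a,a] \<notin> (\<lambda>c. [c]) ` set (p @ a # q)" by auto
  moreover have "finite ((\<lambda>c. [c]) ` set (p @ a # q))" by simp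
  ultimately show ?thesis unfolding rich_def by (simp only: card_insert_disjoint) simp
qed

theorem mainTheorem3:
  fixes w :: "'a list" and n :: nat
  assumes "length w = n"
    and "w \<noteq> []"
    and "\<forall>v\<in>block_reversal w. \<not> rich v"
  shows "card (set w) < n - 1"
proof (rule ccontr)
  assume "\<not> card (set w) < n - 1"
  then have ge: "card (set w) \<ge> n - 1" by simp
  have wbr: "w \<in> block_reversal w" unfolding block_reversal_def
    using assms(2) by (auto intro!: exI[of _ "[w]"])
  show False
  proof (cases "distinct w")
    case True
    then show False using rich_distinct wbr assms(3) by blast
  next
    case False
    then obtain x y z a where w: "w = x @ [a] @ y @ [a] @ z"
      using not_distinct_decomp by blast
    let ?r = "x @ a # y @ z"
    have "set ?r = set w" using w by auto
    then have "card (set ?r) = length ?r" using ge assms(1) w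
    proof -
      have "length ?r = n - 1" using w assms(1) by simp
      moreover have "card (set ?r) \<le> length ?r" by (rule card_length)
      ultimately show ?thesis using ge \<open>set ?r = set w\<close> by simp
    qed
    then have dr: "distinct ?r" by (rule card_distinct)
    then have d2: "distinct (z @ a # y @ x)" by auto
    let ?Bs = "filter (\<lambda>B. B \<noteq> []) [x, a # y, [a], z]"
    have "concat (rev ?Bs) = z @ a # a # y @ x" by simp
    moreover have "concat ?Bs = w" using w by simp
    moreover have "?Bs \<noteq> []" by simp
    ultimately have "z @ a # a # y @ x \<in> block_reversal w"
      unfolding block_reversal_def mem_Collect_eq
      by (intro exI[of _ ?Bs]) auto
    then show False using rich_aa[OF d2] assms(3) by blast
  qed
qed

end
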